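(* Let $(X,d)$ be a metric space and let $u,u_1,u_2,\ldots\in F_{USCG}(X)$. Then the following statements are equivalent: (i) $H_{\rm end}(u_n,u)\to0$; (ii) $H([u_n]_\alpha,[u]_\alpha)\to0$ for almost every $\alpha\in(0,1)$ (Lebesgue measure); (iii) $H([u_n]_\alpha,[u]_\alpha)\to0$ for all $\alpha\in(0,1)\setminus P(u)$; (iv) there is a dense subset $P$ of $(0,1)\setminus P(u)$ such that $H([u_n]_\alpha,[u]_\alpha)\to0$ for all $\alpha\in P$; (v) there is a countable dense subset $P$ of $(0,1)\setminus P(u)$ such that $H([u_n]_\alpha,[u]_\alpha)\to0$ for all $\alpha\in P$.
   Context: A fuzzy set on $X$ is a function $u:X\to[0,1]$, with $\alpha$-cuts $[u]_\alpha=\{x: u(x)\ge\alpha\}$ for $\alpha\in(0,1]$ and $[u]_0=\overline{\{u>0\}}$. $F_{USC}(X)$ is the set of fuzzy sets with all $\alpha$-cuts ($\alpha\in[0,1]$) non-empty and closed; $F_{USCG}(X)=\{u\in F_{USC}(X): [u]_\alpha\text{ compact for all }\alpha\in(0,1]\}$. For non-empty closed sets $U,V$ in a metric space $(Y,\rho)$, $H(U,V)=\max\{\sup_{a\in U}\inf_{b\in V}\rho(a,b),\sup_{b\in V}\inf_{a\in U}\rho(a,b)\}$. $X\times[0,1]$ is metrized by $\overline{d}((x,\alpha),(y,\beta))=d(x,y)+|\alpha-\beta|$, ${\rm end}\,u=\{(x,t)\in X\times[0,1]: u(x)\ge t\}$, $H_{\rm end}(u,v)=H({\rm end}\,u,{\rm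 end}\,v)$. A number $\alpha\in(0,1)$ is a platform point of $u$ if $\overline{\{u>\alpha\}}\subsetneqq[u]_\alpha$; $P(u)$ is the set of platform points of $u$. *)

theory Defs
  imports "HOL-Analysis.Analysis"
begin

definition fuzzy_set :: "('a \<Rightarrow> real) \<Rightarrow> bool" where
  "fuzzy_set u \<longleftrightarrow> (\<forall>x. 0 \<le> u x \<and> u x \<le> 1)"

definition cut :: "('a::topological_space \<Rightarrow> real) \<Rightarrow> real \<Rightarrow> 'a set" where
  "cut u \<alpha> = (if \<alpha> = 0 then closure {x. u x > 0} else {x. u x \<ge> \<alpha>})"

definition F_USC :: "('a::topological_space \<Rightarrow> real) \<Rightarrow> bool" where
  "F_USC u \<longleftrightarrow> fuzzy_set u \<and> (\<forall>\<alpha>\<in>{0..1}. cut u \<alpha> \<noteq> {} \<and> closed (cut u \<alpha>))"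

definition F_USCG :: "('a::topological_space \<Rightarrow> real) \<Rightarrow> bool" where
  "F_USCG u \<longleftrightarrow> F_USC u \<and> (\<forall>\<alpha>\<in>{0<..1}. compact (cut u \<alpha>))"

text \<open>Hausdorff distance w.r.t. a distance function \<rho>, valued in the extended reals
  (it may be infinite for unbounded sets).\<close>

definition hausdorff :: "('b \<Rightarrow> 'b \<Rightarrow> real) \<Rightarrow> 'b set \<Rightarrow> 'b set \<Rightarrow> ereal" where
  "hausdorff \<rho> U V = max (SUP a\<in>U. INF b\<in>V. ereal (\<rho> a b)) (SUP b\<in>V. INF a\<in>U. ereal (\<rho> a b))"

definition H :: "'a::metric_space set \<Rightarrow> 'a set \<Rightarrow> ereal" where
  "H U V = hausdorff dist U V"

definition dbar :: "('a::metric_space \<times> real) \<Rightarrow> ('a \<times> real) \<Rightarrow> real" where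
  "dbar p q = dist (fst p) (fst q) + \<bar>snd p - snd q\<bar>"

definition endo :: "('a \<Rightarrow> real) \<Rightarrow> ('a \<times> real) set" where
  "endo u = {(x, t). t \<in> {0..1} \<and> u x \<ge> t}"

definition H_end :: "('a::metric_space \<Rightarrow> real) \<Rightarrow> ('a \<Rightarrow> real) \<Rightarrow> ereal" where
  "H_end u v = hausdorff dbar (endo u) (endo v)"

definition platform_points :: "('a::topological_space \<Rightarrow> real) \<Rightarrow> real set" where
  "platform_points u = {\<alpha>\<in>{0<..<1}. closure {x. u x > \<alpha>} \<subset> cut u \<alpha>}"

end

theory Submission
  imports Defs "HOL-Analysis.Analysis"
begin

lemma haus_le:
  assumes "\<And>a. a \<in> U \<Longrightarrow> \<exists>b\<in>V. \<rho> a b \<le> e" "\<And>b. b \<in> V \<Longrightarrow> \<exists>a\<in>U. \<rho> a b \<le> e"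
  shows "hausdorff \<rho> U V \<le> ereal e"
  unfolding hausdorff_def
proof (rule max.boundedI)
  show "(SUP a\<in>U. INF b\<in>V. ereal (\<rho> a b)) \<le> ereal e"
  proof (rule SUP_least)
    fix a assume "a \<in> U"
    then obtain b where "b \<in> V" "\<rho> a b \<le> e" using assms(1) by blast
    then show "(INF b\<in>V. ereal (\<rho> a b)) \<le> ereal e" by (meson INF_lower2 ereal_less_eq(3))
  qed
  show "(SUP b\<in>V. INF a\<in>U. ereal (\<rho> a b)) \<le> ereal e"
  proof (rule SUP_least)
    fix b assume "b \<in> V"
    then obtain a where "a \<in> U" "\<rho> a b \<le> e" using assms(2) by blast
    then show "(INF a\<in>U. ereal (\<rho> a b)) \<le> ereal e" by (meson INF_lower2 ereal_less_eq(3))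
  qed
qed

lemma haus_lt1:
  assumes "hausdorff \<rho> U V < ereal e" "a \<in> U" shows "\<exists>b\<in>V. \<rho> a b < e"
proof -
  have "(INF b\<in>V. ereal (\<rho> a b)) \<le> hausdorff \<rho> U V"
    unfolding hausdorff_def using assms(2) by (meson SUP_upper max.coboundedI1)
  then have "(INF b\<in>V. ereal (\<rho> a b)) < ereal e" using assms(1) by simp
  then show ?thesis by (auto simp: INF_less_iff)
qed

lemma haus_lt2:
  assumes "hausdorff \<rho> U V < ereal e" "b \<in> V" shows "\<exists>a\<in>U. \<rho> a b < e"
proof -
  have "(INF a\<in>U. ereal (\<rho> a b)) \<le> hausdorff \<rho> U V"
    unfolding hausdorff_def using assms(2) by (meson SUP_upper max.coboundedI2)
  then have "(INF a\<in>U. ereal (\<rho> a b)) < ereal e" using assms(1) by simp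
  then show ?thesis by (auto simp: INF_less_iff)
qed

lemma haus_nonneg:
  assumes "U \<noteq> {}" "\<And>a b. \<rho> a b \<ge> 0"
  shows "hausdorff \<rho> U V \<ge> 0"
proof -
  obtain a where a: "a \<in> U" using assms by blast
  have "0 \<le> (INF b\<in>V. ereal (\<rho> a b))" by (rule INF_greatest) (use assms in auto)
  also have "\<dots> \<le> (SUP a\<in>U. INF b\<in>V. ereal (\<rho> a b))" using a by (rule SUP_upper)
  finally show ?thesis unfolding hausdorff_def by (simp add: le_max_iff_disj)
qed

lemma haus_conv_iff:
  assumes ne: "\<And>n. U n \<noteq> {}" and pos: "\<And>a b. \<rho> a b \<ge> 0"
  shows "((\<lambda>n. hausdorff \<rho> (U n) V) \<longlonglongrightarrow> 0) \<longleftrightarrow>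
    (\<forall>e>0. eventually (\<lambda>n. (\<forall>a\<in>U n. \<exists>b\<in>V. \<rho> a b < e) \<and> (\<forall>b\<in>V. \<exists>a\<in>U n. \<rho> a b < e)) sequentially)"
proof
  assume L: "(\<lambda>n. hausdorff \<rho> (U n) V) \<longlonglongrightarrow> 0"
  show "\<forall>e>0. eventually (\<lambda>n. (\<forall>a\<in>U n. \<exists>b\<in>V. \<rho> a b < e) \<and> (\<forall>b\<in>V. \<exists>a\<in>U n. \<rho> a b < e)) sequentially"
  proof (intro allI impI)
    fix e :: real assume "e > 0"
    then have "eventually (\<lambda>n. hausdorff \<rho> (U n) V < ereal e) sequentially"
      using order_tendstoD(2)[OF L] by simp
    then show "eventually (\<lambda>n. (\<forall>a\<in>U n. \<exists>b\<in>V. \<rho> a b < e) \<and> (\<forall>b\<in>V. \<exists>a\<in>U n. \<rho> a b < e)) sequentially"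
    proof eventually_elim
      case (elim n)
      show ?case using haus_lt1[OF elim] haus_lt2[OF elim] by blast
    qed
  qed
next
  assume R: "\<forall>e>0. eventually (\<lambda>n. (\<forall>a\<in>U n. \<exists>b\<in>V. \<rho> a b < e) \<and> (\<forall>b\<in>V. \<exists>a\<in>U n. \<rho> a b < e)) sequentially"
  show "(\<lambda>n. hausdorff \<rho> (U n) V) \<longlonglongrightarrow> 0"
  proof (rule order_tendstoI)
    fix a :: ereal assume "a < 0"
    then show "eventually (\<lambda>n. a < hausdorff \<rho> (U n) V) sequentially"
    proof (intro always_eventually allI)
      fix n have "0 \<le> hausdorff \<rho> (U n) V" by (rule haus_nonneg[OF ne pos])
      then show "a < hausdorff \<rho> (U n) V" using \<open>a < 0\<close> by (meson less_le_trans)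
    qed
  next
    fix a :: ereal assume "0 < a"
    then obtain z where z: "0 < ereal z" "ereal z < a" using ereal_dense2 by blast
    then have "z/2 > 0" by simp
    with R have "eventually (\<lambda>n. (\<forall>a\<in>U n. \<exists>b\<in>V. \<rho> a b < z/2) \<and> (\<forall>b\<in>V. \<exists>a\<in>U n. \<rho> a b < z/2)) sequentially"
      by blast
    then show "eventually (\<lambda>n. hausdorff \<rho> (U n) V < a) sequentially"
    proof eventually_elim
      case (elim n)
      then have "hausdorff \<rho> (U n) V \<le> ereal (z/2)"
        by (intro haus_le) (meson less_imp_le)+
      also have "\<dots> < ereal z" using z by simp
      finally show ?case using z by simp
    qed
  qed
qed

lemma cut_pos: "\<alpha> \<noteq> 0 \<Longrightarrow> cut u \<alpha> = {x. \<alpha> \<le> u x}"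
  by (simp add: cut_def)

lemma cut_props:
  assumes "F_USCG u" "0 < \<alpha>" "\<alpha> \<le> 1"
  shows "compact (cut u \<alpha>)" "closed (cut u \<alpha>)" "cut u \<alpha> \<noteq> {}"
  using assms unfolding F_USCG_def F_USC_def by auto

lemma fuzzy_bounds:
  assumes "F_USCG u" shows "0 \<le> u x" "u x \<le> 1"
  using assms unfolding F_USCG_def F_USC_def fuzzy_set_def by auto

lemma finite_separated:
  fixes K :: "'a::metric_space set"
  assumes "compact K" "e > 0" "A \<subseteq> K" "\<And>x y. x \<in> A \<Longrightarrow> y \<in> A \<Longrightarrow> x \<noteq> y \<Longrightarrow> e \<le> dist x y"
  shows "finite A"
proof -
  obtain k where k: "finite k" "k \<subseteq> K" "K \<subseteq> (\<Union>x\<in>k. ball x (e/2))"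
    using seq_compact_imp_totally_bounded[OF compact_imp_seq_compact[OF assms(1)]] assms(2)
    by (meson half_gt_zero)
  have "\<forall>a\<in>A. \<exists>c\<in>k. dist c a < e/2" using k(3) assms(3) by (auto simp: subset_eq)
  then obtain c where c: "\<And>a. a \<in> A \<Longrightarrow> c a \<in> k \<and> dist (c a) a < e/2" by metis
  have "inj_on c A"
  proof (rule inj_onI)
    fix a b assume ab: "a \<in> A" "b \<in> A" "c a = c b"
    have "dist a b \<le> dist (c a) a + dist (c b) b"
      using ab(3) dist_triangle3[of a b "c a"] by (simp add: dist_commute)
    also have "\<dots> < e" using c[OF ab(1)] c[OF ab(2)] by simp
    finally show "a = b" using assms(4)[OF ab(1,2)] by fastforce
  qed
  moreover have "finite (c ` A)" using c k(1) by (meson finite_subset image_subset_iff)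
  ultimately show ?thesis using finite_imageD by blast
qed

lemma platform_countable:
  fixes u :: "'a::metric_space \<Rightarrow> real"
  assumes U: "F_USCG u"
  shows "countable (platform_points u)"
proof -
  define C where "C m = {\<alpha>\<in>platform_points u. \<alpha> > 1/Suc m \<and>
      (\<exists>x. u x = \<alpha> \<and> (\<forall>y. dist x y < 1/Suc m \<longrightarrow> u y \<le> \<alpha>))}" for m :: nat
  have sub: "platform_points u \<subseteq> (\<Union>m. C m)"
  proof
    fix \<alpha> assume a: "\<alpha> \<in> platform_points u"
    then have a01: "0 < \<alpha>" "\<alpha> < 1" and ps: "closure {x. u x > \<alpha>} \<subset> cut u \<alpha>"
      unfolding platform_points_def by auto
    then obtain x where x: "x \<in> cut u \<alpha>" "x \<notin> closure {x. u x > \<alpha>}" by blast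
    then have ux: "u x = \<alpha>" using a01 closure_subset[of "{x. u x > \<alpha>}"] by (force simp: cut_pos)
    from x(2) obtain r where r: "r > 0" "\<forall>y\<in>{x. u x > \<alpha>}. \<not> dist y x < r"
      unfolding closure_approachable by blast
    obtain m1 :: nat where m1: "1 / Suc m1 < r"
      using r(1) by (metis nat_approx_posE)
    obtain m2 :: nat where m2: "1 / Suc m2 < \<alpha>"
      using a01(1) by (metis nat_approx_posE)
    define m where "m = max m1 m2"
    have le: "1 / real (Suc m) \<le> 1 / Suc m1" "1 / real (Suc m) \<le> 1 / Suc m2"
      unfolding m_def by (auto simp: frac_le)
    have "\<forall>y. dist x y < 1/Suc m \<longrightarrow> u y \<le> \<alpha>"
      using r(2) le m1 by (force simp: dist_commute not_less)
    then have "\<alpha> \<in> C m" using a ux le m2 unfolding C_def by auto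
    then show "\<alpha> \<in> (\<Union>m. C m)" by blast
  qed
  have fin: "finite (C m)" for m
  proof -
    define f where "f \<alpha> = (SOME x. u x = \<alpha> \<and> (\<forall>y. dist x y < 1/Suc m \<longrightarrow> u y \<le> \<alpha>))" for \<alpha>
    have f: "u (f \<alpha>) = \<alpha> \<and> (\<forall>y. dist (f \<alpha>) y < 1/Suc m \<longrightarrow> u y \<le> \<alpha>)" if "\<alpha> \<in> C m" for \<alpha>
    proof -
      have "\<exists>x. u x = \<alpha> \<and> (\<forall>y. dist x y < 1/Suc m \<longrightarrow> u y \<le> \<alpha>)"
        using that unfolding C_def by blast
      then show ?thesis unfolding f_def by (rule someI_ex)
    qed
    have inj: "inj_on f (C m)" by (metis f inj_onI)
    have pos: "(0::real) < 1/Suc m" by simp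
    have le1: "1/real (Suc m) \<le> 1" by simp
    have "finite (f ` C m)"
    proof (rule finite_separated[OF cut_props(1)[OF U pos le1] pos])
      show "f ` C m \<subseteq> cut u (1 / real (Suc m))"
      proof
        fix x assume "x \<in> f ` C m"
        then obtain \<alpha> where "\<alpha> \<in> C m" "x = f \<alpha>" by blast
        moreover have "1 / real (Suc m) < \<alpha>" using \<open>\<alpha> \<in> C m\<close> unfolding C_def by auto
        ultimately show "x \<in> cut u (1 / real (Suc m))" using f[of \<alpha>] by (simp add: cut_pos)
      qed
      fix x y assume xy: "x \<in> f ` C m" "y \<in> f ` C m" "x \<noteq> y"
      then obtain \<alpha> \<beta> where ab: "\<alpha> \<in> C m" "\<beta> \<in> C m" "x = f \<alpha>" "y = f \<beta>" by blast
      show "1 / real (Suc m) \<le> dist x y"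
      proof (rule ccontr)
        assume "\<not> ?thesis"
        then have "dist x y < 1/Suc m" "dist y x < 1/Suc m" by (auto simp: dist_commute)
        then have "\<beta> \<le> \<alpha>" "\<alpha> \<le> \<beta>" using f[OF ab(1)] f[OF ab(2)] ab(3,4) by auto
        then show False using xy(3) ab by auto
      qed
    qed
    then show ?thesis using inj finite_imageD by blast
  qed
  show ?thesis
    by (rule countable_subset[OF sub]) (simp add: countable_finite fin)
qed

lemma usc_delta:
  fixes u :: "'a::metric_space \<Rightarrow> real"
  assumes U: "F_USCG u" and a: "0 < \<alpha>" "\<alpha> \<le> 1" and e: "e > 0"
  shows "\<exists>\<delta>>0. \<forall>y. \<alpha> - \<delta> \<le> u y \<longrightarrow> infdist y (cut u \<alpha>) < e"
proof (rule ccontr)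
  assume "\<not> ?thesis"
  then have "\<forall>\<delta>>0. \<exists>y. \<alpha> - \<delta> \<le> u y \<and> e \<le> infdist y (cut u \<alpha>)" by (meson not_less)
  have "\<forall>m::nat. \<exists>y. \<alpha> - \<alpha>/(real m+2) \<le> u y \<and> e \<le> infdist y (cut u \<alpha>)"
  proof
    fix m :: nat
    have "\<alpha>/(real m+2) > 0" using a by simp
    then show "\<exists>y. \<alpha> - \<alpha>/(real m+2) \<le> u y \<and> e \<le> infdist y (cut u \<alpha>)"
      using \<open>\<forall>\<delta>>0. \<exists>y. \<alpha> - \<delta> \<le> u y \<and> e \<le> infdist y (cut u \<alpha>)\<close> by blast
  qed
  then obtain y :: "nat \<Rightarrow> 'a" where y: "\<And>m::nat. \<alpha> - \<alpha>/(real m+2) \<le> u (y m) \<and> e \<le> infdist (y m) (cut u \<alpha>)"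
    by metis
  have inK: "y m \<in> cut u (\<alpha>/2)" for m
  proof -
    have "\<alpha>/(real m+2) \<le> \<alpha>/2" using a by (intro divide_left_mono) auto
    then show ?thesis using y[of m] a by (simp add: cut_pos)
  qed
  have cK: "compact (cut u (\<alpha>/2))" using cut_props[OF U] a by simp
  obtain l r where lr: "l \<in> cut u (\<alpha>/2)" "strict_mono r" "(y \<circ> r) \<longlonglongrightarrow> l"
    using seq_compactE[OF compact_imp_seq_compact[OF cK]] inK by metis
  have lev: "\<alpha> - \<alpha>/(real m0+2) \<le> u l" for m0 :: nat
  proof -
    have lvl: "0 < \<alpha> - \<alpha>/(real m0+2)" "\<alpha> - \<alpha>/(real m0+2) \<le> 1"
    proof -
      have "\<alpha>/(real m0+2) \<le> \<alpha>/2" using a by (intro divide_left_mono) auto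
      then show "0 < \<alpha> - \<alpha>/(real m0+2)" using a by linarith
      show "\<alpha> - \<alpha>/(real m0+2) \<le> 1" using a divide_nonneg_nonneg[of \<alpha> "real m0 + 2"] by linarith 
    qed
    have "eventually (\<lambda>n. (y \<circ> r) n \<in> cut u (\<alpha> - \<alpha>/(real m0+2))) sequentially"
    proof (rule eventually_sequentiallyI[of m0])
      fix n assume "m0 \<le> n"
      then have "m0 \<le> r n" using seq_suble[OF lr(2), of n] by simp
      then have "\<alpha>/(real (r n) + 2) \<le> \<alpha>/(real m0+2)" using a by (intro divide_left_mono) auto
      then show "(y \<circ> r) n \<in> cut u (\<alpha> - \<alpha>/(real m0+2))"
        using y[of "r n"] lvl by (simp add: cut_pos)
    qed
    then have "l \<in> cut u (\<alpha> - \<alpha>/(real m0+2))"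
      using Lim_in_closed_set[OF cut_props(2)[OF U lvl] _ _ lr(3)] by simp
    then show ?thesis using lvl by (simp add: cut_pos)
  qed
  have "\<alpha> \<le> u l"
  proof (rule ccontr)
    assume "\<not> ?thesis"
    then have d: "\<alpha> - u l > 0" by simp
    obtain n :: nat where n: "\<alpha> / (\<alpha> - u l) < n" using reals_Archimedean2 by blast
    then have "\<alpha> < (\<alpha> - u l) * n" using d by (simp add: field_simps)
    also have "\<dots> \<le> (\<alpha> - u l) * (real n+2)" using d by simp
    finally have "\<alpha>/(real n+2) < \<alpha> - u l" by (simp add: field_simps)
    then show False using lev[of n] by simp
  qed
  then have "l \<in> cut u \<alpha>" using a by (simp add: cut_pos)
  then have lim: "(\<lambda>n. infdist ((y \<circ> r) n) (cut u \<alpha>)) \<longlonglongrightarrow> 0"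
    using tendsto_infdist[OF lr(3), of "cut u \<alpha>"] by simp
  have "e \<le> 0"
    by (rule LIMSEQ_le_const[OF lim]) (use y in auto)
  then show False using e by simp
qed

lemma endo_ne: "endo (v::'a::topological_space \<Rightarrow> real) \<noteq> {}" if "F_USCG v"
proof -
  have "(undefined, 0) \<in> endo v" using fuzzy_bounds(1)[OF that] by (simp add: endo_def)
  then show ?thesis by blast
qed

lemma dbar_nonneg: "0 \<le> dbar p q"
  unfolding dbar_def by simp

lemma Hend_conv_iff:
  assumes "\<And>n. F_USCG (us n)"
  shows "((\<lambda>n. H_end (us n) u) \<longlonglongrightarrow> 0) \<longleftrightarrow>
    (\<forall>e>0. eventually (\<lambda>n. (\<forall>p\<in>endo (us n). \<exists>q\<in>endo u. dbar p q < e) \<and> (\<forall>q\<in>endo u. \<exists>p\<in>endo (us n). dbar p q < e)) sequentially)"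
  unfolding H_end_def by (rule haus_conv_iff[OF endo_ne[OF assms] dbar_nonneg])

lemma H_conv_iff:
  assumes "\<And>n. F_USCG (us n)" "0 < \<alpha>" "\<alpha> \<le> 1"
  shows "((\<lambda>n. H (cut (us n) \<alpha>) (cut u \<alpha>)) \<longlonglongrightarrow> 0) \<longleftrightarrow>
    (\<forall>e>0. eventually (\<lambda>n. (\<forall>a\<in>cut (us n) \<alpha>. \<exists>b\<in>cut u \<alpha>. dist a b < e) \<and> (\<forall>b\<in>cut u \<alpha>. \<exists>a\<in>cut (us n) \<alpha>. dist a b < e)) sequentially)"
  unfolding H_def by (rule haus_conv_iff[OF cut_props(3)[OF assms(1) assms(2,3)] zero_le_dist])

lemma infdist_lt_ex:
  assumes "A \<noteq> {}" "infdist x A < e" shows "\<exists>a\<in>A. dist x a < e"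
proof -
  have "(INF a\<in>A. dist x a) < e" using assms by (simp add: infdist_notempty)
  then show ?thesis using assms(1) by (subst (asm) cINF_less_iff) auto
qed

lemma conv_at_nonplatform:
  fixes u :: "'a::metric_space \<Rightarrow> real"
  assumes U: "F_USCG u" and Us: "\<And>n. F_USCG (us n)"
    and A: "(\<lambda>n. H_end (us n) u) \<longlonglongrightarrow> 0"
    and \<alpha>: "\<alpha> \<in> {0<..<1} - platform_points u"
  shows "(\<lambda>n. H (cut (us n) \<alpha>) (cut u \<alpha>)) \<longlonglongrightarrow> 0"
proof -
  have a0: "0 < \<alpha>" and a1: "\<alpha> < 1" using \<alpha> by auto
  have A': "\<And>e. e > 0 \<Longrightarrow> eventually (\<lambda>n. (\<forall>p\<in>endo (us n). \<exists>q\<in>endo u. dbar p q < e) \<and> (\<forall>q\<in>endo u. \<exists>p\<in>endo (us n). dbar p q < e)) sequentially"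
    using Hend_conv_iff[OF Us, THEN iffD1, OF A] by blast
  have Cne: "cut u \<alpha> \<noteq> {}" and Ccl: "closed (cut u \<alpha>)" and Ccp: "compact (cut u \<alpha>)"
    using cut_props[OF U a0] a1 by auto
  have clos: "closure {x. u x > \<alpha>} = cut u \<alpha>"
  proof -
    have "closure {x. u x > \<alpha>} \<subseteq> cut u \<alpha>"
      by (rule closure_minimal[OF _ Ccl]) (use a0 in \<open>auto simp: cut_pos\<close>)
    moreover have "\<not> closure {x. u x > \<alpha>} \<subset> cut u \<alpha>" using \<alpha> unfolding platform_points_def by auto
    ultimately show ?thesis by blast
  qed
  show ?thesis
    unfolding H_conv_iff[OF Us a0 less_imp_le[OF a1]]
  proof (intro allI impI eventually_conj)
    fix e :: real assume e: "e > 0"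
    obtain \<delta>0 where d0: "\<delta>0 > 0" "\<And>y. \<alpha> - \<delta>0 \<le> u y \<Longrightarrow> infdist y (cut u \<alpha>) < e/2"
      using usc_delta[OF U a0 less_imp_le[OF a1], of "e/2"] e by auto
    define \<delta> where "\<delta> = min \<delta>0 (e/2)"
    have dpos: "\<delta> > 0" using d0 e by (simp add: \<delta>_def)
    show "eventually (\<lambda>n. \<forall>a\<in>cut (us n) \<alpha>. \<exists>b\<in>cut u \<alpha>. dist a b < e) sequentially"
      using A'[OF dpos]
    proof eventually_elim
      case (elim n)
      show ?case
      proof
        fix a assume a: "a \<in> cut (us n) \<alpha>"
        then have "(a, \<alpha>) \<in> endo (us n)" using a0 a1 by (simp add: endo_def cut_pos)
        then obtain q where q: "q \<in> endo u" "dbar (a, \<alpha>) q < \<delta>" using elim by blast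
        obtain b s where bs: "q = (b, s)" by (cases q)
        have "s \<le> u b" using q(1) bs by (simp add: endo_def)
        moreover have "dist a b + \<bar>\<alpha> - s\<bar> < \<delta>" using q(2) bs by (simp add: dbar_def)
        ultimately have "\<alpha> - \<delta>0 \<le> u b" and dab: "dist a b < e/2"
          using abs_ge_self[of "\<alpha> - s"] zero_le_dist[of a b] abs_ge_zero[of "\<alpha> - s"]
            min.cobounded1[of \<delta>0 "e/2"] min.cobounded2[of \<delta>0 "e/2"] unfolding \<delta>_def[symmetric] by linarith+
        then have "infdist b (cut u \<alpha>) < e/2" using d0 by blast
        then obtain c where c: "c \<in> cut u \<alpha>" "dist b c < e/2" using infdist_lt_ex[OF Cne] by blast
        have "dist a c \<le> dist a b + dist b c" by (rule dist_triangle)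
        also have "\<dots> < e" using dab c by simp
        finally show "\<exists>b\<in>cut u \<alpha>. dist a b < e" using c by blast
      qed
    qed
  next
    fix e :: real assume e: "e > 0"
    have cov: "cut u \<alpha> \<subseteq> (\<Union>z\<in>{x. u x > \<alpha>}. ball z (e/2))"
    proof
      fix c assume "c \<in> cut u \<alpha>"
      then have "c \<in> closure {x. u x > \<alpha>}" using clos by simp
      then obtain z where "z \<in> {x. u x > \<alpha>}" "dist z c < e/2"
        unfolding closure_approachable using e by (meson half_gt_zero)
      then show "c \<in> (\<Union>z\<in>{x. u x > \<alpha>}. ball z (e/2))" by auto
    qed
    obtain Z where Z: "Z \<subseteq> {x. u x > \<alpha>}" "finite Z" "cut u \<alpha> \<subseteq> (\<Union>z\<in>Z. ball z (e/2))"
    proof (rule compactE_image[OF Ccp _ cov])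
      show "\<And>T. T \<in> {x. u x > \<alpha>} \<Longrightarrow> open (ball T (e/2))" by simp
    next
      fix C' assume "C' \<subseteq> {x. u x > \<alpha>}" "finite C'" "cut u \<alpha> \<subseteq> (\<Union>z\<in>C'. ball z (e/2))"
      then show thesis by (rule that)
    qed
    have "\<forall>z\<in>Z. eventually (\<lambda>n. \<exists>a. \<alpha> \<le> us n a \<and> dist a z < e/2) sequentially"
    proof
      fix z assume "z \<in> Z"
      then have uz: "u z > \<alpha>" using Z(1) by auto
      define \<delta> where "\<delta> = min (e/2) (u z - \<alpha>)"
      have dpos: "\<delta> > 0" using uz e by (simp add: \<delta>_def)
      have zin: "(z, u z) \<in> endo u" using fuzzy_bounds[OF U, of z] by (simp add: endo_def)
      show "eventually (\<lambda>n. \<exists>a. \<alpha> \<le> us n a \<and> dist a z < e/2) sequentially"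
        using A'[OF dpos]
      proof eventually_elim
        case (elim n)
        then obtain p where p: "p \<in> endo (us n)" "dbar p (z, u z) < \<delta>" using zin by blast
        obtain a t where at: "p = (a, t)" by (cases p)
        have "t \<le> us n a" using p(1) at by (simp add: endo_def)
        moreover have "dist a z + \<bar>t - u z\<bar> < \<delta>" using p(2) at by (simp add: dbar_def)
        ultimately have "\<alpha> \<le> us n a" "dist a z < e/2"
          using abs_ge_minus_self[of "t - u z"] zero_le_dist[of a z] abs_ge_zero[of "t - u z"]
            min.cobounded1[of "e/2" "u z - \<alpha>"] min.cobounded2[of "e/2" "u z - \<alpha>"] unfolding \<delta>_def[symmetric] by linarith+
        then show ?case by blast
      qed
    qed
    then have "eventually (\<lambda>n. \<forall>z\<in>Z. \<exists>a. \<alpha> \<le> us n a \<and> dist a z < e/2) sequentially"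
      by (rule eventually_ball_finite[OF Z(2)])
    then show "eventually (\<lambda>n. \<forall>b\<in>cut u \<alpha>. \<exists>a\<in>cut (us n) \<alpha>. dist a b < e) sequentially"
    proof eventually_elim
      case (elim n)
      show ?case
      proof
        fix b assume "b \<in> cut u \<alpha>"
        then obtain z where z: "z \<in> Z" "dist z b < e/2" using Z(3) by auto
        then obtain a where a: "\<alpha> \<le> us n a" "dist a z < e/2" using elim by blast
        have "dist a b \<le> dist a z + dist z b" by (rule dist_triangle)
        also have "\<dots> < e" using a z by simp
        finally show "\<exists>a\<in>cut (us n) \<alpha>. dist a b < e" using a a0 by (auto simp: cut_pos)
      qed
    qed
  qed
qed

lemma grid:
  fixes Q :: "real set"
  assumes dense: "\<And>a b. 0 \<le> a \<Longrightarrow> a < b \<Longrightarrow> b \<le> 1 \<Longrightarrow> \<exists>q\<in>Q. a < q \<and> q < b"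
    and e: "e > 0"
  shows "\<exists>G. finite G \<and> G \<subseteq> Q \<and> (\<forall>t. 0 \<le> t \<longrightarrow> t \<le> 1 \<longrightarrow> t < e \<or> (\<exists>\<alpha>\<in>G. \<alpha> \<le> t \<and> t - \<alpha> < e))"
proof -
  obtain N :: nat where N: "2/e < N" using reals_Archimedean2 by blast
  have Npos: "real N > 0" using N e by (smt (verit) divide_pos_pos)
  have NE: "2 < e * N" using N e by (simp add: field_simps)
  have "\<forall>j\<in>{1..N}. \<exists>q. q \<in> Q \<and> (real j - 1)/N < q \<and> q < real j / N"
  proof
    fix j assume j: "j \<in> {1..N}"
    have "0 \<le> (real j - 1)/N" using j Npos by auto
    moreover have "(real j - 1)/N < real j / N" using Npos by (simp add: divide_strict_right_mono)
    moreover have "real j / N \<le> 1" using j Npos by auto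
    ultimately show "\<exists>q. q \<in> Q \<and> (real j - 1)/N < q \<and> q < real j / N" using dense by blast
  qed
  then obtain g where g: "\<And>j. j \<in> {1..N} \<Longrightarrow> g j \<in> Q \<and> (real j - 1)/N < g j \<and> g j < real j / N"
    by metis
  show ?thesis
  proof (intro exI conjI allI impI)
    show "finite (g ` {1..N})" by simp
    show "g ` {1..N} \<subseteq> Q" using g by auto
    fix t :: real assume t: "0 \<le> t" "t \<le> 1"
    show "t < e \<or> (\<exists>\<alpha>\<in>g ` {1..N}. \<alpha> \<le> t \<and> t - \<alpha> < e)"
    proof (cases "t < e")
      case True then show ?thesis by simp
    next
      case False
      define k where "k = \<lfloor>t * N\<rfloor>"
      have k1: "real_of_int k \<le> t * N" "t * N < real_of_int k + 1" unfolding k_def by simp_all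
      have "e * N \<le> t * N" using False Npos by (simp add: mult_right_mono)
      then have k2: "k \<ge> 2" using NE k1 by linarith
      have "t * N \<le> N" using t Npos by simp
      then have k3: "k \<le> N" using k1 by linarith
      define j where "j = nat k"
      have jr: "real j = real_of_int k" using k2 unfolding j_def by simp
      have jN: "j \<in> {1..N}" using k2 k3 unfolding j_def by auto
      have "g j < real j / N" using g[OF jN] by simp
      also have "real j / N \<le> t" using k1 jr Npos by (simp add: divide_le_eq)
      finally have le: "g j \<le> t" by simp
      have "t < (real j + 1) / N" using k1 jr Npos by (simp add: less_divide_eq)
      moreover have "(real j - 1)/N < g j" using g[OF jN] by simp
      ultimately have "t - g j < (real j + 1) / N - (real j - 1)/N" by linarith
      also have "\<dots> = 2 / N" by (simp add: diff_divide_distrib[symmetric])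
      also have "\<dots> < e" using NE Npos by (simp add: divide_less_eq mult.commute)
      finally show ?thesis using le jN by blast
    qed
  qed
qed

lemma dense_conv:
  fixes u :: "'a::metric_space \<Rightarrow> real"
  assumes U: "F_USCG u" and Us: "\<And>n. F_USCG (us n)"
    and Q01: "Q \<subseteq> {0<..<1}"
    and dense: "\<And>a b. 0 \<le> a \<Longrightarrow> a < b \<Longrightarrow> b \<le> 1 \<Longrightarrow> \<exists>q\<in>Q. a < q \<and> q < b"
    and conv: "\<And>\<alpha>. \<alpha> \<in> Q \<Longrightarrow> (\<lambda>n. H (cut (us n) \<alpha>) (cut u \<alpha>)) \<longlonglongrightarrow> 0"
  shows "(\<lambda>n. H_end (us n) u) \<longlonglongrightarrow> 0"
  unfolding Hend_conv_iff[OF Us]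
proof (intro allI impI)
  fix e :: real assume e: "e > 0"
  then have e2: "e/2 > 0" by simp
  obtain G where G: "finite G" "G \<subseteq> Q" "\<And>t. 0 \<le> t \<Longrightarrow> t \<le> 1 \<Longrightarrow> t < e/2 \<or> (\<exists>\<alpha>\<in>G. \<alpha> \<le> t \<and> t - \<alpha> < e/2)"
    using grid[OF dense e2] by blast
  have G01: "\<And>\<alpha>. \<alpha> \<in> G \<Longrightarrow> 0 < \<alpha> \<and> \<alpha> < 1" using G(2) Q01 by auto
  have "\<forall>\<alpha>\<in>G. eventually (\<lambda>n. (\<forall>a\<in>cut (us n) \<alpha>. \<exists>b\<in>cut u \<alpha>. dist a b < e/2) \<and> (\<forall>b\<in>cut u \<alpha>. \<exists>a\<in>cut (us n) \<alpha>. dist a b < e/2)) sequentially"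
  proof
    fix \<alpha> assume a: "\<alpha> \<in> G"
    have a01: "0 < \<alpha>" "\<alpha> \<le> 1" using G01[OF a] by auto
    show "eventually (\<lambda>n. (\<forall>a\<in>cut (us n) \<alpha>. \<exists>b\<in>cut u \<alpha>. dist a b < e/2) \<and> (\<forall>b\<in>cut u \<alpha>. \<exists>a\<in>cut (us n) \<alpha>. dist a b < e/2)) sequentially"
      using H_conv_iff[OF Us a01, THEN iffD1, OF conv] a G(2) e2 by blast
  qed
  then have ev: "eventually (\<lambda>n. \<forall>\<alpha>\<in>G. (\<forall>a\<in>cut (us n) \<alpha>. \<exists>b\<in>cut u \<alpha>. dist a b < e/2) \<and> (\<forall>b\<in>cut u \<alpha>. \<exists>a\<in>cut (us n) \<alpha>. dist a b < e/2)) sequentially"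
    by (rule eventually_ball_finite[OF G(1)])
  show "eventually (\<lambda>n. (\<forall>p\<in>endo (us n). \<exists>q\<in>endo u. dbar p q < e) \<and> (\<forall>q\<in>endo u. \<exists>p\<in>endo (us n). dbar p q < e)) sequentially"
    using ev
  proof eventually_elim
    case (elim n)
    show ?case
    proof (intro conjI ballI)
      fix p assume p: "p \<in> endo (us n)"
      obtain x t where xt: "p = (x, t)" by (cases p)
      have t: "0 \<le> t" "t \<le> 1" "t \<le> us n x" using p xt by (auto simp: endo_def)
      show "\<exists>q\<in>endo u. dbar p q < e"
      proof (cases "t < e/2")
        case True
        have "(x, 0) \<in> endo u" using fuzzy_bounds[OF U, of x] by (simp add: endo_def)
        moreover have "dbar p (x, 0) < e" using True t xt e by (simp add: dbar_def)
        ultimately show ?thesis by blast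
      next
        case False
        then obtain \<alpha> where a: "\<alpha> \<in> G" "\<alpha> \<le> t" "t - \<alpha> < e/2" using G(3)[OF t(1,2)] by blast
        have a01: "0 < \<alpha>" "\<alpha> < 1" using G01[OF a(1)] by auto
        have "x \<in> cut (us n) \<alpha>" using a t a01 by (simp add: cut_pos)
        then obtain b where b: "b \<in> cut u \<alpha>" "dist x b < e/2" using elim a(1) by blast
        have "(b, \<alpha>) \<in> endo u" using b a01 by (simp add: endo_def cut_pos)
        moreover have "dbar p (b, \<alpha>) < e" using b a xt by (simp add: dbar_def)
        ultimately show ?thesis by blast
      qed
    next
      fix q assume q: "q \<in> endo u"
      obtain y s where ys: "q = (y, s)" by (cases q)
      have s: "0 \<le> s" "s \<le> 1" "s \<le> u y" using q ys by (auto simp: endo_def)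
      show "\<exists>p\<in>endo (us n). dbar p q < e"
      proof (cases "s < e/2")
        case True
        have "(y, 0) \<in> endo (us n)" using fuzzy_bounds[OF Us, of n y] by (simp add: endo_def)
        moreover have "dbar (y, 0) q < e" using True s ys e by (simp add: dbar_def)
        ultimately show ?thesis by blast
      next
        case False
        then obtain \<alpha> where a: "\<alpha> \<in> G" "\<alpha> \<le> s" "s - \<alpha> < e/2" using G(3)[OF s(1,2)] by blast
        have a01: "0 < \<alpha>" "\<alpha> < 1" using G01[OF a(1)] by auto
        have "y \<in> cut u \<alpha>" using a s a01 by (simp add: cut_pos)
        then obtain b where b: "b \<in> cut (us n) \<alpha>" "dist b y < e/2" using elim a(1) by blast
        have "(b, \<alpha>) \<in> endo (us n)" using b a01 by (simp add: endo_def cut_pos)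
        moreover have "dbar (b, \<alpha>) q < e" using b a ys by (simp add: dbar_def)
        ultimately show ?thesis by blast
      qed
    qed
  qed
qed

theorem theorem4p6:
  fixes u :: "'a::metric_space \<Rightarrow> real" and us :: "nat \<Rightarrow> 'a \<Rightarrow> real"
  assumes "F_USCG u" and "\<And>n. F_USCG (us n)"
  shows "(((\<lambda>n. H_end (us n) u) \<longlonglongrightarrow> 0)
           \<longleftrightarrow> (AE \<alpha> in lborel. \<alpha> \<in> {0<..<1} \<longrightarrow>
                   ((\<lambda>n. H (cut (us n) \<alpha>) (cut u \<alpha>)) \<longlonglongrightarrow> 0)))
       \<and> (((\<lambda>n. H_end (us n) u) \<longlonglongrightarrow> 0)
           \<longleftrightarrow> (\<forall>\<alpha>\<in>{0<..<1} - platform_points u.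
                   ((\<lambda>n. H (cut (us n) \<alpha>) (cut u \<alpha>)) \<longlonglongrightarrow> 0)))
       \<and> (((\<lambda>n. H_end (us n) u) \<longlonglongrightarrow> 0)
           \<longleftrightarrow> (\<exists>P. P \<subseteq> {0<..<1} - platform_points u
                   \<and> {0<..<1} - platform_points u \<subseteq> closure P
                   \<and> (\<forall>\<alpha>\<in>P. ((\<lambda>n. H (cut (us n) \<alpha>) (cut u \<alpha>)) \<longlonglongrightarrow> 0))))
       \<and> (((\<lambda>n. H_end (us n) u) \<longlonglongrightarrow> 0)
           \<longleftrightarrow> (\<exists>P. countable P \<and> P \<subseteq> {0<..<1} - platform_points u
                   \<and> {0<..<1} - platform_points u \<subseteq> closure P
                   \<and> (\<forall>\<alpha>\<in>P. ((\<lambda>n. H (cut (us n) \<alpha>) (cut u \<alpha>)) \<longlonglongrightarrow> 0))))"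
proof -
  note U = assms(1) and Us = assms(2)
  define S where "S = {0<..<1} - platform_points u"
  have cnt: "countable (platform_points u)" by (rule platform_countable[OF U])
  have L1: "\<And>\<alpha>. (\<lambda>n. H_end (us n) u) \<longlonglongrightarrow> 0 \<Longrightarrow> \<alpha> \<in> S \<Longrightarrow> (\<lambda>n. H (cut (us n) \<alpha>) (cut u \<alpha>)) \<longlonglongrightarrow> 0"
    unfolding S_def by (rule conv_at_nonplatform[OF U Us])
  have S01: "S \<subseteq> {0<..<1}" unfolding S_def by auto
  have Sdense: "\<exists>q\<in>S. a < q \<and> q < b" if "0 \<le> a" "a < b" "b \<le> 1" for a b :: real
  proof -
    have "\<not> {a<..<b} \<subseteq> platform_points u"
      using uncountable_open_interval[of a b] that(2) countable_subset cnt by blast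
    then obtain q where "q \<in> {a<..<b}" "q \<notin> platform_points u" by blast
    then show ?thesis using that unfolding S_def by auto
  qed
  have cldense: "\<exists>q\<in>P. a < q \<and> q < b"
    if P: "S \<subseteq> closure P" and ab: "0 \<le> a" "a < b" "b \<le> 1" for P a b
  proof -
    obtain s where s: "s \<in> S" "a < s" "s < b" using Sdense[OF ab] by blast
    then have "s \<in> closure P" using P by blast
    moreover have "min (s - a) (b - s) > 0" using s by simp
    ultimately obtain y where "y \<in> P" "dist y s < min (s - a) (b - s)"
      unfolding closure_approachable by blast
    then have yP: "y \<in> P" and "abs (y - s) < s - a \<and> abs (y - s) < b - s" by (auto simp: dist_real_def)
    then have "a < y \<and> y < b" by (auto simp: abs_less_iff)
    then show ?thesis using yP by blast
  qed
  have dense_back: "(\<lambda>n. H_end (us n) u) \<longlonglongrightarrow> 0"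
    if "P \<subseteq> S" "S \<subseteq> closure P" "\<forall>\<alpha>\<in>P. (\<lambda>n. H (cut (us n) \<alpha>) (cut u \<alpha>)) \<longlonglongrightarrow> 0" for P
  proof (rule dense_conv[OF U Us])
    show "P \<subseteq> {0<..<1}" using that(1) S01 by blast
    show "\<And>a b. 0 \<le> a \<Longrightarrow> a < b \<Longrightarrow> b \<le> 1 \<Longrightarrow> \<exists>q\<in>P. a < q \<and> q < b"
      using cldense[OF that(2)] by blast
    show "\<And>\<alpha>. \<alpha> \<in> P \<Longrightarrow> (\<lambda>n. H (cut (us n) \<alpha>) (cut u \<alpha>)) \<longlonglongrightarrow> 0" using that(3) by blast
  qed
  have ii: "((\<lambda>n. H_end (us n) u) \<longlonglongrightarrow> 0) \<longleftrightarrow> (AE \<alpha> in lborel. \<alpha> \<in> {0<..<1} \<longrightarrow>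
                   ((\<lambda>n. H (cut (us n) \<alpha>) (cut u \<alpha>)) \<longlonglongrightarrow> 0))"
  proof
    assume A: "(\<lambda>n. H_end (us n) u) \<longlonglongrightarrow> 0"
    show "AE \<alpha> in lborel. \<alpha> \<in> {0<..<1} \<longrightarrow> ((\<lambda>n. H (cut (us n) \<alpha>) (cut u \<alpha>)) \<longlonglongrightarrow> 0)"
    proof (rule AE_mp[OF AE_not_in[OF countable_imp_null_set_lborel[OF cnt]]], rule AE_I2, intro impI)
      fix \<alpha> assume "\<alpha> \<notin> platform_points u" "\<alpha> \<in> {0<..<1}"
      then show "(\<lambda>n. H (cut (us n) \<alpha>) (cut u \<alpha>)) \<longlonglongrightarrow> 0" using L1[OF A] unfolding S_def by blast
    qed
  next
    assume AE: "AE \<alpha> in lborel. \<alpha> \<in> {0<..<1} \<longrightarrow> ((\<lambda>n. H (cut (us n) \<alpha>) (cut u \<alpha>)) \<longlonglongrightarrow> 0)"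
    define Q where "Q = {\<alpha>\<in>{0<..<1}. (\<lambda>n. H (cut (us n) \<alpha>) (cut u \<alpha>)) \<longlonglongrightarrow> 0}"
    show "(\<lambda>n. H_end (us n) u) \<longlonglongrightarrow> 0"
    proof (rule dense_conv[OF U Us])
      show "Q \<subseteq> {0<..<1}" unfolding Q_def by blast
      show "\<And>\<alpha>. \<alpha> \<in> Q \<Longrightarrow> (\<lambda>n. H (cut (us n) \<alpha>) (cut u \<alpha>)) \<longlonglongrightarrow> 0" unfolding Q_def by blast
      fix a b :: real assume ab: "0 \<le> a" "a < b" "b \<le> 1"
      show "\<exists>q\<in>Q. a < q \<and> q < b"
      proof (rule ccontr)
        assume no: "\<not> ?thesis"
        from AE obtain N where N: "{x \<in> space lborel. \<not> (x \<in> {0<..<1} \<longrightarrow> ((\<lambda>n. H (cut (us n) x) (cut u x)) \<longlonglongrightarrow> 0))} \<subseteq> N"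
          "emeasure lborel N = 0" "N \<in> sets lborel"
          by (rule AE_E)
        have "{a<..<b} \<subseteq> N"
        proof
          fix x assume x: "x \<in> {a<..<b}"
          then have "x \<in> {0<..<1}" using ab by auto
          moreover have "\<not> (\<lambda>n. H (cut (us n) x) (cut u x)) \<longlonglongrightarrow> 0"
            using no x \<open>x \<in> {0<..<1}\<close> unfolding Q_def by auto
          ultimately show "x \<in> N" using N(1) by auto
        qed
        then have "emeasure lborel {a<..<b} \<le> emeasure lborel N"
          by (rule emeasure_mono[OF _ N(3)])
        then have "ennreal (b - a) \<le> 0" using N(2) ab by simp
        then show False using ab by simp
      qed
    qed
  qed
  have iii: "((\<lambda>n. H_end (us n) u) \<longlonglongrightarrow> 0) \<longleftrightarrow> (\<forall>\<alpha>\<in>{0<..<1} - platform_points u.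
                   ((\<lambda>n. H (cut (us n) \<alpha>) (cut u \<alpha>)) \<longlonglongrightarrow> 0))"
    using L1 dense_back[of S] closure_subset[of S] unfolding S_def by blast
  have iv: "((\<lambda>n. H_end (us n) u) \<longlonglongrightarrow> 0) \<longleftrightarrow> (\<exists>P. P \<subseteq> {0<..<1} - platform_points u
                   \<and> {0<..<1} - platform_points u \<subseteq> closure P
                   \<and> (\<forall>\<alpha>\<in>P. ((\<lambda>n. H (cut (us n) \<alpha>) (cut u \<alpha>)) \<longlonglongrightarrow> 0)))"
  proof
    assume A: "(\<lambda>n. H_end (us n) u) \<longlonglongrightarrow> 0"
    show "\<exists>P. P \<subseteq> {0<..<1} - platform_points u \<and> {0<..<1} - platform_points u \<subseteq> closure P
                   \<and> (\<forall>\<alpha>\<in>P. ((\<lambda>n. H (cut (us n) \<alpha>) (cut u \<alpha>)) \<longlonglongrightarrow> 0))"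
      using L1[OF A] closure_subset[of S] unfolding S_def by blast
  next
    assume "\<exists>P. P \<subseteq> {0<..<1} - platform_points u \<and> {0<..<1} - platform_points u \<subseteq> closure P
                   \<and> (\<forall>\<alpha>\<in>P. ((\<lambda>n. H (cut (us n) \<alpha>) (cut u \<alpha>)) \<longlonglongrightarrow> 0))"
    then show "(\<lambda>n. H_end (us n) u) \<longlonglongrightarrow> 0" using dense_back unfolding S_def by blast
  qed
  have v: "((\<lambda>n. H_end (us n) u) \<longlonglongrightarrow> 0) \<longleftrightarrow> (\<exists>P. countable P \<and> P \<subseteq> {0<..<1} - platform_points u
                   \<and> {0<..<1} - platform_points u \<subseteq> closure P
                   \<and> (\<forall>\<alpha>\<in>P. ((\<lambda>n. H (cut (us n) \<alpha>) (cut u \<alpha>)) \<longlonglongrightarrow> 0)))"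
  proof
    assume A: "(\<lambda>n. H_end (us n) u) \<longlonglongrightarrow> 0"
    obtain T where T: "countable T" "T \<subseteq> S" "S \<subseteq> closure T" using separable[of S] by blast
    show "\<exists>P. countable P \<and> P \<subseteq> {0<..<1} - platform_points u \<and> {0<..<1} - platform_points u \<subseteq> closure P
                   \<and> (\<forall>\<alpha>\<in>P. ((\<lambda>n. H (cut (us n) \<alpha>) (cut u \<alpha>)) \<longlonglongrightarrow> 0))"
      using L1[OF A] T unfolding S_def by blast
  next
    assume "\<exists>P. countable P \<and> P \<subseteq> {0<..<1} - platform_points u \<and> {0<..<1} - platform_points u \<subseteq> closure P
                   \<and> (\<forall>\<alpha>\<in>P. ((\<lambda>n. H (cut (us n) \<alpha>) (cut u \<alpha>)) \<longlonglongrightarrow> 0))"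
    then show "(\<lambda>n. H_end (us n) u) \<longlonglongrightarrow> 0" using dense_back unfolding S_def by blast
  qed
  show ?thesis using ii iii iv v by blast
qed

end
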